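(* Let $G$ be a group generated by elements $g_1,\dots,g_n$ and let $H$ be a cocommutative Hopf algebra over $\Bbbk$. Then every $\varphi\in\mathrm{Hom}_{\mathcal H}(G;H)$ is completely determined by the single element $\varphi_n(g_1,\dots,g_n)\in H^{\otimes n}$; that is, the evaluation map $\varphi\mapsto\varphi_n(g_1,\dots,g_n)$ from $\mathrm{Hom}_{\mathcal H}(G;H)$ to $H^{\otimes n}$ is injective.
   Context: $\Bbbk$ is a field of characteristic $0$. $H$ is a cocommutative Hopf algebra over $\Bbbk$ with multiplication $m$, comultiplication $\Delta$, unit $\eta\colon\Bbbk\to H$, counit $\epsilon\colon H\to\Bbbk$ and antipode $S$. For a group $G$, $\mathrm{Hom}_{\mathcal H}(G;H)$ denotes the set of sequences $\varphi=(\varphi_k)_{k\ge0}$ of functions $\varphi_k\colon G^k\to H^{\otimes k}$ (with $H^{\otimes 0}=\Bbbk$, $\varphi_0=1$) satisfying, for all $k$ and all group elements: (1) $\varphi_k$ commutes with the action of $\Sigma_k$ (permuting entries of $G^k$ and tensor factors); (2) $\varphi_k(1,g_1,\dots,g_{k-1})=\eta(1)\otimes\varphi_{k-1}(g_1,\dots,g_{k-1})$; (3) $(\epsilon\otimes\mathrm{id}^{k-1})\varphi_k(g_1,\dots,g_k)=\varphi_{k-1}(g_2,\dots,g_k)$; (4) $\varphi_k(g^{-1},g_1,\dots,g_{k-1})=(S\otimes\mathrm{id}^{k-1})\varphi_k(g,g_1,\dots,g_{k-1})$; (5) $\varphi_k(g,g,g_1,\dots,g_{k-2})=(\Delta\otimes\mathrm{id}^{k-2})\varphi_{k-1}(g,g_1,\dots,g_{k-2})$;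 (6) $\varphi_k(g_1g_2,g_3,\dots,g_{k+1})=(m\otimes\mathrm{id}^{k-1})\varphi_{k+1}(g_1,g_2,\dots,g_{k+1})$. *)

theory Defs
  imports "HOL-Algebra.Generated_Groups" "HOL-Combinatorics.Permutations"
begin

text \<open>
Model of the tensor algebra of a vector space H over a field 'k with basis type 'b:
an element of H^{\<otimes>k} is a finitely supported function 'b list \<Rightarrow> 'k supported on
lists of length k (the basis of H^{\<otimes>k} is the set of words b1...bk of basis vectors).
Every vector space has a basis, so this is no loss of generality.
Linear maps are given by their values on basis words and extended linearly by lin.
\<close>

type_synonym ('b,'k) tensor = "'b list \<Rightarrow> 'k"

definition supp :: "('b,'k::zero) tensor \<Rightarrow> 'b list set" where
  "supp x = {u. x u \<noteq> 0}"

definition Tn :: "nat \<Rightarrow> ('b,'k::zero) tensor \<Rightarrow> bool" where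
  "Tn k x \<longleftrightarrow> finite (supp x) \<and> (\<forall>u \<in> supp x. length u = k)"

definition basis :: "'b list \<Rightarrow> ('b,'k::{zero,one}) tensor" where
  "basis u = (\<lambda>w. if w = u then 1 else 0)"

definition lin :: "('b list \<Rightarrow> ('b,'k::comm_ring_1) tensor) \<Rightarrow> ('b,'k) tensor \<Rightarrow> ('b,'k) tensor" where
  "lin f x = (\<lambda>v. \<Sum>u\<in>supp x. x u * f u v)"

definition tprod :: "('b,'k::comm_ring_1) tensor \<Rightarrow> ('b,'k) tensor \<Rightarrow> ('b,'k) tensor" where
  "tprod x y = lin (\<lambda>u. lin (\<lambda>v. basis (u @ v)) y) x"

text \<open>id^{\<otimes>i} \<otimes> f \<otimes> id^{\<otimes>...}: apply f (defined on words of length j) to the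
  tensor factors i+1,...,i+j\<close>
definition atpos :: "nat \<Rightarrow> nat \<Rightarrow> ('b list \<Rightarrow> ('b,'k::comm_ring_1) tensor) \<Rightarrow> 'b list \<Rightarrow> ('b,'k) tensor" where
  "atpos i j f u = tprod (tprod (basis (take i u)) (f (take j (drop i u)))) (basis (drop (i + j) u))"

definition flip2 :: "'b list \<Rightarrow> ('b,'k::comm_ring_1) tensor" where
  "flip2 u = basis [u ! 1, u ! 0]"

text \<open>Structure maps of a Hopf algebra on basis words:
  hmul: H\<otimes>H \<rightarrow> H on words [a,b]; hunit = \<eta>(1) \<in> H; hcomul: H \<rightarrow> H\<otimes>H on words [b];
  hcounit: H \<rightarrow> \<Bbbk> = H^{\<otimes>0} on words [b]; hanti: H \<rightarrow> H on words [b].\<close>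
record ('b,'k) hopf =
  hmul :: "'b list \<Rightarrow> ('b,'k) tensor"
  hunit :: "('b,'k) tensor"
  hcomul :: "'b list \<Rightarrow> ('b,'k) tensor"
  hcounit :: "'b list \<Rightarrow> ('b,'k) tensor"
  hanti :: "'b list \<Rightarrow> ('b,'k) tensor"

definition cocomm_hopf :: "('b,'k::field_char_0) hopf \<Rightarrow> bool" where
  "cocomm_hopf H \<longleftrightarrow>
     (let m = hmul H; e = hunit H; d = hcomul H; c = hcounit H; s = hanti H in
     \<comment> \<open>typing\<close>
     (\<forall>a b. Tn 1 (m [a, b])) \<and> Tn 1 e \<and> (\<forall>b. Tn 2 (d [b])) \<and>
     (\<forall>b. Tn 0 (c [b])) \<and> (\<forall>b. Tn 1 (s [b])) \<and>
     \<comment> \<open>associativity and unit\<close>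
     (\<forall>a b x. lin (atpos 0 2 m) (lin (atpos 0 2 m) (basis [a, b, x]))
             = lin (atpos 0 2 m) (lin (atpos 1 2 m) (basis [a, b, x]))) \<and>
     (\<forall>b. lin (atpos 0 2 m) (tprod e (basis [b])) = basis [b]) \<and>
     (\<forall>b. lin (atpos 0 2 m) (tprod (basis [b]) e) = basis [b]) \<and>
     \<comment> \<open>coassociativity and counit\<close>
     (\<forall>b. lin (atpos 0 1 d) (d [b]) = lin (atpos 1 1 d) (d [b])) \<and>
     (\<forall>b. lin (atpos 0 1 c) (d [b]) = basis [b]) \<and>
     (\<forall>b. lin (atpos 1 1 c) (d [b]) = basis [b]) \<and>
     \<comment> \<open>bialgebra compatibility\<close>
     (\<forall>a b. lin (atpos 0 1 d) (m [a, b]) =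
        lin (atpos 1 2 m) (lin (atpos 0 2 m) (lin (atpos 1 2 flip2) (tprod (d [a]) (d [b]))))) \<and>
     lin (atpos 0 1 d) e = tprod e e \<and>
     (\<forall>a b. lin (atpos 0 1 c) (m [a, b]) = tprod (c [a]) (c [b])) \<and>
     lin (atpos 0 1 c) e = basis [] \<and>
     \<comment> \<open>antipode: m (S \<otimes> id) \<Delta> = \<eta> \<epsilon> = m (id \<otimes> S) \<Delta>\<close>
     (\<forall>b. lin (atpos 0 2 m) (lin (atpos 0 1 s) (d [b])) = lin (\<lambda>_. e) (c [b])) \<and>
     (\<forall>b. lin (atpos 0 2 m) (lin (atpos 1 1 s) (d [b])) = lin (\<lambda>_. e) (c [b])) \<and>
     \<comment> \<open>cocommutativity\<close>
     (\<forall>b. lin flip2 (d [b]) = d [b]))"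

text \<open>Hom_H(G;H): \<phi> is represented by one function on lists of group elements,
  \<phi>_k = \<phi> restricted to lists of length k (extensional outside carrier lists).\<close>
definition HomH :: "('g,'c) monoid_scheme \<Rightarrow> ('b,'k::field_char_0) hopf \<Rightarrow> ('g list \<Rightarrow> ('b,'k) tensor) set" where
  "HomH G H = {phi.
     (\<forall>gs. gs \<notin> lists (carrier G) \<longrightarrow> phi gs = undefined) \<and>
     (\<forall>gs \<in> lists (carrier G). Tn (length gs) (phi gs)) \<and>
     phi [] = basis [] \<and>
     (\<forall>gs \<in> lists (carrier G). \<forall>\<sigma>. \<sigma> permutes {..<length gs} \<longrightarrow>
        phi (map (\<lambda>i. gs ! \<sigma> i) [0..<length gs]) =
        lin (\<lambda>u. basis (map (\<lambda>i. u ! \<sigma> i) [0..<length gs])) (phi gs)) \<and>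
     (\<forall>gs \<in> lists (carrier G). phi (\<one>\<^bsub>G\<^esub> # gs) = tprod (hunit H) (phi gs)) \<and>
     (\<forall>g \<in> carrier G. \<forall>gs \<in> lists (carrier G).
        lin (atpos 0 1 (hcounit H)) (phi (g # gs)) = phi gs) \<and>
     (\<forall>g \<in> carrier G. \<forall>gs \<in> lists (carrier G).
        phi (inv\<^bsub>G\<^esub> g # gs) = lin (atpos 0 1 (hanti H)) (phi (g # gs))) \<and>
     (\<forall>g \<in> carrier G. \<forall>gs \<in> lists (carrier G).
        phi (g # g # gs) = lin (atpos 0 1 (hcomul H)) (phi (g # gs))) \<and>
     (\<forall>g1 \<in> carrier G. \<forall>g2 \<in> carrier G. \<forall>gs \<in> lists (carrier G).
        phi (g1 \<otimes>\<^bsub>G\<^esub> g2 # gs) = lin (atpos 0 2 (hmul H)) (phi (g1 # g2 # gs)))}"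

end

theory Submission
  imports Defs
begin

theorem mainTheorem2:
  fixes G :: "('g, 'c) monoid_scheme" and H :: "('b, 'k::field_char_0) hopf"
    and gens :: "'g list"
  assumes "group G"
    and "set gens \<subseteq> carrier G"
    and "generate G (set gens) = carrier G"
    and "cocomm_hopf H"
  shows "inj_on (\<lambda>phi. phi gens) (HomH G H)"
proof (rule inj_onI)
  fix phi psi
  assume P: "phi \<in> HomH G H" and Q: "psi \<in> HomH G H" and eq: "phi gens = psi gens"
  interpret group G by fact
  define E where "E gs \<longleftrightarrow> gs \<in> lists (carrier G) \<and> phi gs = psi gs" for gs
  note PD = P[unfolded HomH_def mem_Collect_eq] and QD = Q[unfolded HomH_def mem_Collect_eq]
  have perm: "E ys" if h1: "E xs" and h2: "mset ys = mset xs" for xs ys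
  proof -
    obtain p where p: "p permutes {..<length xs}" "permute_list p xs = ys"
      using mset_eq_permutation[OF h2] by blast
    have xs: "xs \<in> lists (carrier G)" "phi xs = psi xs" using h1 E_def by auto
    have "phi ys = psi ys"
      using PD QD xs p unfolding permute_list_def by metis
    moreover have "set ys = set xs" using h2 by (metis set_mset_mset)
    ultimately show ?thesis using xs E_def by auto
  qed
  have cnt: "E gs" if "E (g # gs)" for g gs
    using that PD QD unfolding E_def by (metis Cons_in_lists_iff)
  have invs: "E (inv\<^bsub>G\<^esub> g # gs)" if "E (g # gs)" for g gs
    using that PD QD unfolding E_def by (metis Cons_in_lists_iff inv_closed)
  have dup: "E (g # g # gs)" if "E (g # gs)" for g gs
    using that PD QD unfolding E_def by (metis Cons_in_lists_iff)
  have mul: "E (g1 \<otimes>\<^bsub>G\<^esub> g2 # gs)" if "E (g1 # g2 # gs)" for g1 g2 gs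
    using that PD QD unfolding E_def by (metis Cons_in_lists_iff m_closed)
  have unt: "E (\<one>\<^bsub>G\<^esub> # gs)" if "E gs" for gs
    using that PD QD unfolding E_def by (metis Cons_in_lists_iff one_closed)
  have E0: "E gens" using eq assms(2) E_def by auto
  have key: "\<forall>ks. E (gens @ ks) \<longrightarrow> E (gens @ h # ks)" if "h \<in> generate G (set gens)" for h
    using that
  proof (induction h rule: generate.induct)
    case one
    then show ?case using unt perm by (metis mset_append mset.simps(2) add_mset_add_single
          union_commute union_assoc)
  next
    case (incl h)
    show ?case
    proof (intro allI impI)
      fix ks assume a: "E (gens @ ks)"
      obtain as bs where g: "gens = as @ h # bs" using incl split_list by metis
      have "E (h # as @ bs @ ks)" using perm[OF a] g by simp
      then have "E (h # h # as @ bs @ ks)" by (rule dup)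
      then show "E (gens @ h # ks)" using perm g by fastforce
    qed
  next
    case (inv h)
    show ?case
    proof (intro allI impI)
      fix ks assume a: "E (gens @ ks)"
      obtain as bs where g: "gens = as @ h # bs" using inv split_list by metis
      have "E (h # as @ bs @ ks)" using perm[OF a] g by simp
      then have "E (h # h # as @ bs @ ks)" by (rule dup)
      then have "E (inv\<^bsub>G\<^esub> h # h # as @ bs @ ks)" by (rule invs)
      then show "E (gens @ inv\<^bsub>G\<^esub> h # ks)" using perm g by fastforce
    qed
  next
    case (eng h1 h2)
    show ?case
    proof (intro allI impI)
      fix ks assume a: "E (gens @ ks)"
      have "E (gens @ h1 # h2 # ks)" using eng a by blast
      then have "E (h1 # h2 # gens @ ks)" using perm by fastforce
      then have "E (h1 \<otimes>\<^bsub>G\<^esub> h2 # gens @ ks)" by (rule mul)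
      then show "E (gens @ h1 \<otimes>\<^bsub>G\<^esub> h2 # ks)" using perm by fastforce
    qed
  qed
  have all: "E (gens @ ks)" if "ks \<in> lists (carrier G)" for ks
    using that
  proof (induction ks)
    case Nil then show ?case using E0 by simp
  next
    case (Cons k ks)
    then show ?case using key[of k] assms(3) by auto
  qed
  have drop: "E ys" if "E (xs @ ys)" for xs ys
    using that by (induction xs) (auto intro: cnt)
  show "phi = psi"
  proof
    fix gs
    show "phi gs = psi gs"
    proof (cases "gs \<in> lists (carrier G)")
      case True
      then show ?thesis using drop[OF all[OF True]] E_def by auto
    next
      case False
      then show ?thesis using PD QD by metis
    qed
  qed
qed

end
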